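(* Let $K\in\mathbb{R}^{m\times n}$ and let $Q=\begin{bmatrix}Q_{11}&Q_{12}\\Q_{12}^\top&Q_{22}\end{bmatrix}\in\mathbb{R}^{(n+m)\times(n+m)}$ be symmetric with $Q_{11}\in\mathbb{R}^{n\times n}$. Define $$Y(x)=\begin{bmatrix}x\\ \mathrm{dz}(Kx)\end{bmatrix}^\top Q\begin{bmatrix}x\\ \mathrm{dz}(Kx)\end{bmatrix},\qquad x\in\mathbb{R}^n,$$ and, for a diagonal $T_0\in\mathbb{R}^{m\times m}$ and a symmetric $R\in\mathbb{R}^{m\times m}$, $$\Sigma_0=\begin{bmatrix}0&K^\top T_0\\ T_0K&-2T_0\end{bmatrix},\qquad \Sigma_R=\begin{bmatrix}K^\top RK&-K^\top R\\ -RK&R\end{bmatrix}.$$ Then: (i) If there exist a diagonal $T_0\succeq 0$ and a symmetric $R\succeq 0$ with $Q-\Sigma_0-\Sigma_R\succeq 0$, then $Y$ is positive semi-definite. (ii) If there exist a diagonal $T_0\succeq0$ and a symmetric $R\succ 0$ with $Q-\Sigma_0-\Sigma_R\succeq 0$, then $Y$ is positive semi-definite and $Y(x)\ge \lambda_{\min}(R)\,|\mathrm{sat}(Kx)|^2$ for all $x\in\mathbb{R}^n$. (iii) If there exists a symmetric $R\succ0$ with $Q_{11}\succ 0$ and $Q-\Sigma_R\succeq 0$, then $Y$ is positive definite (but not necessarily radially unbounded). (iv) If there exists a diagonal $T_0\succ 0$ with $Q_{11}\succ0$ and $Q-\Sigma_0\succeq 0$, then $Y$ is positive definite and radially unbo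unded.
   Context: The saturation $\mathrm{sat}:\mathbb{R}^m\to\mathbb{R}^m$ is decentralized: $\mathrm{sat}(u)_i=\min\{\overline{u}_i,\max\{-\underline{u}_i,u_i\}\}$ for given limits $\overline{u}_i>0$, $\underline{u}_i>0$ (possibly non-symmetric). The deadzone is $\mathrm{dz}(u)=u-\mathrm{sat}(u)$. $\succ0$/$\succeq0$ denote positive definite/semi-definite; $\lambda_{\min}(R)$ is the smallest eigenvalue of $R$. *)

theory Defs
  imports "HOL-Analysis.Analysis"
begin

text \<open>Decentralized saturation with (possibly non-symmetric) limits: the upper limit of
  component i is ub i, the lower limit is -lb i; positivity of the limits is assumed in the
  theorem.\<close>
definition sat :: "real^'m \<Rightarrow> real^'m \<Rightarrow> real^'m \<Rightarrow> real^'m" where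
  "sat ub lb u = (\<chi> i. min (ub $ i) (max (- (lb $ i)) (u $ i)))"

definition dz :: "real^'m \<Rightarrow> real^'m \<Rightarrow> real^'m \<Rightarrow> real^'m" where
  "dz ub lb u = u - sat ub lb u"

definition stack :: "real^'n \<Rightarrow> real^'m \<Rightarrow> real^('n::finite + 'm::finite)" where
  "stack x w = (\<chi> i. case i of Inl a \<Rightarrow> x $ a | Inr b \<Rightarrow> w $ b)"

definition block_mat ::
  "real^'n^'n \<Rightarrow> real^'m^'n \<Rightarrow> real^'n^'m \<Rightarrow> real^'m^'m \<Rightarrow> real^('n::finite + 'm::finite)^('n + 'm)" where
  "block_mat A B C D = (\<chi> i j. case i of
       Inl a \<Rightarrow> (case j of Inl b \<Rightarrow> A $ a $ b | Inr b \<Rightarrow> B $ a $ b)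
     | Inr a \<Rightarrow> (case j of Inl b \<Rightarrow> C $ a $ b | Inr b \<Rightarrow> D $ a $ b))"

definition blk11 :: "real^('n::finite + 'm::finite)^('n + 'm) \<Rightarrow> real^'n^'n" where
  "blk11 Q = (\<chi> a b. Q $ Inl a $ Inl b)"

definition symmetric_mat :: "real^'n^'n \<Rightarrow> bool" where
  "symmetric_mat M \<longleftrightarrow> transpose M = M"

definition psd_mat :: "real^'n^'n \<Rightarrow> bool" where
  "psd_mat M \<longleftrightarrow> (\<forall>v. v \<bullet> (M *v v) \<ge> 0)"

definition pd_mat :: "real^'n^'n \<Rightarrow> bool" where
  "pd_mat M \<longleftrightarrow> (\<forall>v. v \<noteq> 0 \<longrightarrow> v \<bullet> (M *v v) > 0)"

definition diagonal_mat :: "real^'n^'n \<Rightarrow> bool" where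
  "diagonal_mat M \<longleftrightarrow> (\<forall>i j. i \<noteq> j \<longrightarrow> M $ i $ j = 0)"

text \<open>Smallest (real) eigenvalue; used only for symmetric matrices, whose eigenvalues are all real.\<close>
definition lambda_min :: "real^'n^'n \<Rightarrow> real" where
  "lambda_min M = Min {c. \<exists>v. v \<noteq> 0 \<and> M *v v = c *s v}"

definition psd_fun :: "(real^'n \<Rightarrow> real) \<Rightarrow> bool" where
  "psd_fun Y \<longleftrightarrow> Y 0 = 0 \<and> (\<forall>x. Y x \<ge> 0)"

definition pd_fun :: "(real^'n \<Rightarrow> real) \<Rightarrow> bool" where
  "pd_fun Y \<longleftrightarrow> Y 0 = 0 \<and> (\<forall>x. x \<noteq> 0 \<longrightarrow> Y x > 0)"

definition radially_unbounded :: "(real^'n \<Rightarrow> real) \<Rightarrow> bool" where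
  "radially_unbounded Y \<longleftrightarrow> filterlim Y at_top at_infinity"

definition Sigma0 :: "real^'n^'m \<Rightarrow> real^'m^'m \<Rightarrow> real^('n::finite + 'm::finite)^('n + 'm)" where
  "Sigma0 K T0 = block_mat 0 (transpose K ** T0) (T0 ** K) (- 2 *\<^sub>R T0)"

definition SigmaR :: "real^'n^'m \<Rightarrow> real^'m^'m \<Rightarrow> real^('n::finite + 'm::finite)^('n + 'm)" where
  "SigmaR K R = block_mat (transpose K ** R ** K) (- (transpose K ** R)) (- (R ** K)) R"

end

theory Submission
  imports Defs
begin


lemma inner_sum_type:
  fixes u v :: "real^('n::finite + 'm::finite)"
  shows "u \<bullet> v = (\<Sum>a\<in>UNIV. u $ Inl a * v $ Inl a) + (\<Sum>b\<in>UNIV. u $ Inr b * v $ Inr b)"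
proof -
  have "u \<bullet> v = (\<Sum>i\<in>(UNIV::'n set) <+> (UNIV::'m set). u $ i * v $ i)"
    by (simp add: inner_vec_def)
  also have "\<dots> = (\<Sum>a\<in>UNIV. u $ Inl a * v $ Inl a) + (\<Sum>b\<in>UNIV. u $ Inr b * v $ Inr b)"
    by (subst sum.Plus) auto
  finally show ?thesis .
qed

lemma block_mv:
  fixes A :: "real^'n^'n" and B :: "real^'m^'n" and C :: "real^'n^'m" and D :: "real^'m^'m"
  shows "block_mat A B C D *v stack x w = stack (A *v x + B *v w) (C *v x + D *v w)"
proof -
  have "\<And>i. (block_mat A B C D *v stack x w) $ i = stack (A *v x + B *v w) (C *v x + D *v w) $ i"
  proof -
    fix i :: "'n + 'm"
    have e: "(block_mat A B C D *v stack x w) $ i = (\<Sum>j\<in>(UNIV::'n set) <+> (UNIV::'m set). block_mat A B C D $ i $ j * stack x w $ j)"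
      by (simp add: matrix_vector_mult_def)
    show "?thesis i"
      unfolding e by (subst sum.Plus) (auto simp: block_mat_def stack_def matrix_vector_mult_def split: sum.splits)
  qed
  then show ?thesis by (simp add: vec_eq_iff)
qed

lemma stack_inner: "stack x w \<bullet> stack y v = x \<bullet> y + w \<bullet> v"
  by (simp add: inner_sum_type stack_def inner_vec_def)

lemma block_quad:
  fixes A :: "real^'n^'n" and B :: "real^'m^'n" and C :: "real^'n^'m" and D :: "real^'m^'m"
  shows "stack x w \<bullet> (block_mat A B C D *v stack x w) = x \<bullet> (A *v x) + x \<bullet> (B *v w) + w \<bullet> (C *v x) + w \<bullet> (D *v w)"
  by (simp add: block_mv stack_inner inner_add_right)

lemma stack_zero: "stack 0 0 = 0"
  by (simp add: stack_def vec_eq_iff split: sum.splits)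

lemma stack_add: "stack x w + stack y v = stack (x+y) (w+v)"
  by (simp add: stack_def vec_eq_iff split: sum.splits)

lemma stack_scale: "c *\<^sub>R stack x w = stack (c *\<^sub>R x) (c *\<^sub>R w)"
  by (simp add: stack_def vec_eq_iff split: sum.splits)

lemma norm_stack: "norm (stack x w) ^ 2 = norm x ^ 2 + norm w ^ 2"
  by (simp add: power2_norm_eq_inner stack_inner)

lemma transp_inner2: "x \<bullet> (v v* K) = (K *v x) \<bullet> (v::real^'a)"
proof -
  have "x \<bullet> (v v* K) = (v v* K) \<bullet> x" by (rule inner_commute)
  also have "\<dots> = v \<bullet> (K *v x)" by (rule dot_lmul_matrix)
  also have "\<dots> = (K *v x) \<bullet> v" by (rule inner_commute)
  finally show ?thesis .
qed

lemma transp_inner: "x \<bullet> (transpose K *v v) = (K *v x) \<bullet> (v::real^'a)"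
  by (simp only: transpose_matrix_vector transp_inner2)

lemma sym_inner:
  assumes "transpose R = R"
  shows "x \<bullet> (R *v v) = v \<bullet> (R *v (x::real^'a))"
proof -
  have "x \<bullet> (R *v v) = x \<bullet> (transpose R *v v)" using assms by simp
  also have "\<dots> = (R *v x) \<bullet> v" by (rule transp_inner)
  also have "\<dots> = v \<bullet> (R *v x)" by (rule inner_commute)
  finally show ?thesis .
qed

lemma scaleR_mv: "(c *\<^sub>R A) *v v = c *\<^sub>R (A *v (v::real^'a))"
  by (simp add: vec_eq_iff matrix_vector_mult_def sum_distrib_left mult.assoc)

lemma uminus_mv: "(- A) *v v = - (A *v (v::real^'a))"
  by (simp add: vec_eq_iff matrix_vector_mult_def sum_negf)


lemma quad_SigmaR:
  "stack x w \<bullet> (SigmaR K R *v stack x w) = (K *v x - w) \<bullet> (R *v (K *v x - w))"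
  unfolding SigmaR_def block_quad
  by (simp add: matrix_vector_mul_assoc[symmetric] transp_inner matrix_vector_mult_diff_distrib
      inner_diff_left inner_diff_right uminus_mv transp_inner2)

lemma quad_Sigma0:
  "stack x w \<bullet> (Sigma0 K T0 *v stack x w) = (K *v x) \<bullet> (T0 *v w) + w \<bullet> (T0 *v (K *v x)) - 2 * (w \<bullet> (T0 *v w))"
  unfolding Sigma0_def block_quad
  by (simp add: matrix_vector_mul_assoc[symmetric] transp_inner transp_inner2 scaleR_mv uminus_mv)



lemma mv_add: "A *v (x + y) = A *v x + A *v (y::real^'a)"
  by (simp add: vec_eq_iff matrix_vector_mult_def sum.distrib distrib_left)

lemma mv_diff: "A *v (x - y) = A *v x - A *v (y::real^'a)"
  by (simp add: vec_eq_iff matrix_vector_mult_def sum_subtractf right_diff_distrib)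

lemma mv_scale: "A *v (c *\<^sub>R x) = c *\<^sub>R (A *v (x::real^'a))"
  by (simp add: vec_eq_iff matrix_vector_mult_def sum_distrib_left algebra_simps)

lemma quad_scale: "(c *\<^sub>R x) \<bullet> (A *v (c *\<^sub>R x)) = c^2 * (x \<bullet> (A *v (x::real^'a)))"
  by (simp add: mv_scale power2_eq_square)

lemma mv_bound: "\<exists>C>0. \<forall>v. norm (A *v (v::real^'a)) \<le> C * norm v"
proof -
  have "bounded_linear (\<lambda>v::real^'a. A *v v)"
    using matrix_vector_mul_linear linear_conv_bounded_linear by blast
  then obtain C where "C > 0" "\<forall>v. norm (A *v (v::real^'a)) \<le> norm v * C"
    using bounded_linear.pos_bounded by blast
  then show ?thesis by (intro exI[of _ C]) (simp add: mult.commute)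
qed

lemma quad_cont: "continuous_on S (\<lambda>v. v \<bullet> (A *v (v::real^'a)))"
proof -
  have "bounded_linear (\<lambda>v::real^'a. A *v v)"
    using matrix_vector_mul_linear linear_conv_bounded_linear by blast
  then have "continuous_on S (\<lambda>v::real^'a. A *v v)"
    by (simp add: linear_continuous_on)
  then show ?thesis by (intro continuous_intros)
qed

lemma quad_min: "\<exists>v0. norm (v0::real^'a) = 1 \<and> (\<forall>x. x \<bullet> (A *v x) \<ge> (v0 \<bullet> (A *v v0)) * norm x ^ 2)"
proof -
  have "sphere (0::real^'a) 1 \<noteq> {}" by simp
  then obtain v0 where v0: "v0 \<in> sphere (0::real^'a) 1"
    "\<forall>y\<in>sphere 0 1. v0 \<bullet> (A *v v0) \<le> y \<bullet> (A *v y)"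
    using continuous_attains_inf[OF compact_sphere _ quad_cont] by blast
  have "x \<bullet> (A *v x) \<ge> (v0 \<bullet> (A *v v0)) * norm x ^ 2" for x
  proof (cases "x = 0")
    case True then show ?thesis by simp
  next
    case False
    let ?y = "(1 / norm x) *\<^sub>R x"
    have "?y \<in> sphere 0 1" using False by simp
    then have "v0 \<bullet> (A *v v0) \<le> ?y \<bullet> (A *v ?y)" using v0 by blast
    also have "\<dots> = (1/norm x)^2 * (x \<bullet> (A *v x))" by (rule quad_scale)
    finally have "v0 \<bullet> (A *v v0) * norm x ^ 2 \<le> (1/norm x)^2 * (x \<bullet> (A *v x)) * norm x ^ 2"
      by (simp add: mult_right_mono)
    also have "\<dots> = x \<bullet> (A *v x)" using False by (simp add: field_simps)
    finally show ?thesis .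
  qed
  then show ?thesis using v0 by auto
qed

lemma pd_lower:
  assumes "pd_mat A"
  shows "\<exists>\<alpha>>0. \<forall>x. x \<bullet> (A *v x) \<ge> \<alpha> * norm (x::real^'a) ^ 2"
proof -
  obtain v0 where "norm (v0::real^'a) = 1" "\<forall>x. x \<bullet> (A *v x) \<ge> (v0 \<bullet> (A *v v0)) * norm x ^ 2"
    using quad_min by blast
  moreover have "v0 \<noteq> 0" using \<open>norm v0 = 1\<close> by auto
  then have "v0 \<bullet> (A *v v0) > 0" using assms unfolding pd_mat_def by auto
  ultimately show ?thesis by blast
qed

lemma lambda_min_le:
  fixes R :: "real^'a^'a"
  assumes sym: "transpose R = R"
  shows "lambda_min R * norm s ^ 2 \<le> s \<bullet> (R *v s)"
proof -
  obtain v0 where v0: "norm (v0::real^'a) = 1" "\<forall>x. x \<bullet> (R *v x) \<ge> (v0 \<bullet> (R *v v0)) * norm x ^ 2"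
    using quad_min by blast
  define \<mu> where "\<mu> = v0 \<bullet> (R *v v0)"
  define g where "g = R *v v0 - \<mu> *\<^sub>R v0"
  define a where "a = g \<bullet> g"
  define b where "b = g \<bullet> (R *v g) - \<mu> * (g \<bullet> g)"
  have h: "0 \<le> 2 * t * a + t^2 * b" for t
  proof -
    have F1: "(v0 + t *\<^sub>R g) \<bullet> (R *v (v0 + t *\<^sub>R g)) \<ge> \<mu> * norm (v0 + t *\<^sub>R g) ^ 2"
      using v0 \<mu>_def by blast
    have F2: "(v0 + t *\<^sub>R g) \<bullet> (R *v (v0 + t *\<^sub>R g)) = \<mu> + 2 * t * (g \<bullet> (R *v v0)) + t^2 * (g \<bullet> (R *v g))"
      using sym_inner[OF sym, of v0 g]
      by (simp add: mv_add mv_scale inner_add_left inner_add_right \<mu>_def power2_eq_square algebra_simps)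
    have F3: "norm (v0 + t *\<^sub>R g) ^ 2 = 1 + 2 * t * (g \<bullet> v0) + t^2 * (g \<bullet> g)"
    proof -
      have vv: "v0 \<bullet> v0 = 1" using v0(1) by (simp add: dot_square_norm)
      have "norm (v0 + t *\<^sub>R g) ^ 2 = (v0 + t *\<^sub>R g) \<bullet> (v0 + t *\<^sub>R g)" by (rule power2_norm_eq_inner)
      also have "\<dots> = 1 + 2 * t * (g \<bullet> v0) + t^2 * (g \<bullet> g)"
        using vv by (simp add: inner_add_left inner_add_right power2_eq_square algebra_simps inner_commute)
      finally show ?thesis .
    qed
    have F4: "a = g \<bullet> (R *v v0) - \<mu> * (g \<bullet> v0)"
          proof -
      have "a = g \<bullet> (R *v v0 - \<mu> *\<^sub>R v0)" by (simp add: a_def g_def)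
      then show ?thesis by (simp add: inner_diff_right)
    qed
    have G: "0 \<le> (\<mu> + 2 * t * (g \<bullet> (R *v v0)) + t^2 * (g \<bullet> (R *v g))) - \<mu> * (1 + 2 * t * (g \<bullet> v0) + t^2 * (g \<bullet> g))"
      using F1 unfolding F2 F3 by linarith
    have E: "(\<mu> + 2 * t * (g \<bullet> (R *v v0)) + t^2 * (g \<bullet> (R *v g))) - \<mu> * (1 + 2 * t * (g \<bullet> v0) + t^2 * (g \<bullet> g)) = 2 * t * a + t^2 * b"
      unfolding F4 b_def by (simp add: algebra_simps)
    show ?thesis using G E by linarith
  qed
  have "a = 0"
  proof -
    define c where "c = \<bar>b\<bar> + 1"
    define t where "t = - a / c"
    have pos: "c > 0" unfolding c_def by simp
    have h0: "0 \<le> 2 * t * a + t^2 * b" by (rule h)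
    have h1: "t^2 * b \<le> t^2 * c - t^2" unfolding c_def by (simp add: mult_left_mono distrib_left)
    have h4: "2 * t * a + t^2 * c = - (a^2 / c)" using pos unfolding t_def by (simp add: field_simps power2_eq_square)
    have h5: "a^2 / c \<ge> 0" using pos by simp
    have "t^2 \<ge> 0" by simp
    then have "0 \<le> - (a^2 / c)" using h0 h1 h4 by linarith
    then have "a^2 / c \<le> 0" by linarith
    then have "a^2 \<le> 0" using pos by (simp add: divide_le_0_iff)
    then show ?thesis by simp
  qed
  then have "g = 0" unfolding a_def by simp
  then have eig: "R *v v0 = \<mu> *s v0" unfolding g_def by (simp add: scalar_mult_eq_scaleR)
  define E where "E = {c. \<exists>v. v \<noteq> 0 \<and> R *v v = c *s v}"
  have muE: "\<mu> \<in> E" unfolding E_def using eig v0(1) by (auto intro!: exI[of _ v0])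
  have lowE: "\<mu> \<le> c" if cE: "c \<in> E" for c
  proof -
    obtain v where v: "v \<noteq> 0" "R *v v = c *s v" using cE unfolding E_def by auto
    have "\<mu> * norm v ^ 2 \<le> v \<bullet> (R *v v)" using v0 \<mu>_def by blast
    also have "\<dots> = c * norm v ^ 2" using v by (simp add: scalar_mult_eq_scaleR power2_norm_eq_inner)
    finally show ?thesis using v by simp
  qed
  have finE: "finite E"
  proof -
    define ev where "ev c = (SOME v. v \<noteq> 0 \<and> R *v v = c *s v)" for c
    have ev: "ev c \<noteq> 0 \<and> R *v ev c = c *s ev c" if "c \<in> E" for c
    proof -
      have "\<exists>v. v \<noteq> 0 \<and> R *v v = c *s v" using that unfolding E_def by auto
      then show ?thesis unfolding ev_def by (rule someI_ex)
    qed
    have orth: "ev c \<bullet> ev d = 0" if "c \<in> E" "d \<in> E" "c \<noteq> d" for c d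
    proof -
      have "c * (ev c \<bullet> ev d) = (R *v ev c) \<bullet> ev d" using ev[OF that(1)] by (simp add: scalar_mult_eq_scaleR)
      also have "\<dots> = ev d \<bullet> (R *v ev c)" by (simp add: inner_commute)
      also have "\<dots> = ev c \<bullet> (R *v ev d)" by (rule sym_inner[OF sym])
      also have "\<dots> = d * (ev c \<bullet> ev d)" using ev[OF that(2)] by (simp add: scalar_mult_eq_scaleR)
      finally show ?thesis using that(3) by simp
    qed
    have inj: "inj_on ev E"
    proof (rule inj_onI)
      fix c d assume cd: "c \<in> E" "d \<in> E" "ev c = ev d"
      show "c = d"
      proof (rule ccontr)
        assume "c \<noteq> d"
        then have "ev c \<bullet> ev c = 0" using orth[OF cd(1,2)] cd(3) by simp
        then show False using ev[OF cd(1)] by simp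
      qed
    qed
    have "pairwise orthogonal (ev ` E)"
      unfolding pairwise_def orthogonal_def using orth by auto
    moreover have "0 \<notin> ev ` E" using ev by auto
    ultimately have "independent (ev ` E)" by (rule pairwise_orthogonal_independent)
    then have "finite (ev ` E)" by (rule finiteI_independent)
    then show ?thesis using inj finite_imageD by blast
  qed
  have "lambda_min R = \<mu>"
    unfolding lambda_min_def E_def[symmetric]
    using finE muE lowE by (intro Min_eqI) auto
  then show ?thesis using v0 \<mu>_def by simp
qed



lemma sat_comp: "sat ub lb u $ i = min (ub $ i) (max (- (lb $ i)) (u $ i))"
  by (simp add: sat_def)

lemma dz_comp: "dz ub lb u $ i = u $ i - min (ub $ i) (max (- (lb $ i)) (u $ i))"
  by (simp add: dz_def sat_def)

lemma dz_sat_sign: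
  assumes "ub $ i > 0" "lb $ i > 0"
  shows "dz ub lb u $ i * sat ub lb u $ i \<ge> min (ub $ i) (lb $ i) * \<bar>dz ub lb u $ i\<bar>"
proof -
  let ?m = "min (ub $ i) (lb $ i)"
  consider "u $ i > ub $ i" | "u $ i < - lb $ i" | "- lb $ i \<le> u $ i \<and> u $ i \<le> ub $ i" by linarith
  then show ?thesis
  proof cases
    case 1
    then have e: "dz ub lb u $ i = u $ i - ub $ i" "sat ub lb u $ i = ub $ i"
      using assms unfolding dz_comp sat_comp by auto
    have "?m * (u $ i - ub $ i) \<le> ub $ i * (u $ i - ub $ i)" using 1 by (intro mult_right_mono) auto
    then show ?thesis using 1 unfolding e by (simp add: mult.commute)
  next
    case 2
    then have e: "dz ub lb u $ i = u $ i + lb $ i" "sat ub lb u $ i = - lb $ i"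
      using assms unfolding dz_comp sat_comp by auto
    have "?m * (- (u $ i + lb $ i)) \<le> lb $ i * (- (u $ i + lb $ i))" using 2 by (intro mult_right_mono) auto
    then show ?thesis using 2 unfolding e by (simp add: algebra_simps)
  next
    case 3
    then have e: "dz ub lb u $ i = 0"
      using assms unfolding dz_comp by auto
    then show ?thesis by simp
  qed
qed

lemma sat_zero:
  assumes "\<forall>i. ub $ i > 0" "\<forall>i. lb $ i > 0" "sat ub lb u = 0"
  shows "u = 0"
proof -
  have "u $ i = 0" for i
  proof -
    have "min (ub $ i) (max (- (lb $ i)) (u $ i)) = 0" 
    proof -
      have "sat ub lb u $ i = 0" using assms(3) by simp
      then show ?thesis by (simp add: sat_comp)
    qed
    then show ?thesis using assms(1,2)[rule_format, of i] by (auto simp: min_def max_def split: if_splits)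
  qed
  then show ?thesis by (simp add: vec_eq_iff)
qed

lemma dz_zero:
  assumes "\<forall>i. ub $ i > 0" "\<forall>i. lb $ i > 0"
  shows "dz ub lb 0 = 0"
proof -
  have "dz ub lb 0 $ i = 0" for i
  proof -
    have "max (- (lb $ i)) 0 = 0" using assms(2)[rule_format, of i] by (simp add: max_def)
    moreover have "min (ub $ i) 0 = 0" using assms(1)[rule_format, of i] by (simp add: min_def)
    ultimately show ?thesis by (simp add: dz_comp)
  qed
  then show ?thesis by (simp add: vec_eq_iff)
qed

lemma sat_dz: "sat ub lb u = u - dz ub lb u"
  by (simp add: dz_def)

lemma diag_mv:
  assumes "diagonal_mat T"
  shows "(T *v s) $ i = T $ i $ i * s $ i"
proof -
  have "(T *v s) $ i = (\<Sum>j\<in>UNIV. T $ i $ j * s $ j)"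
    by (simp add: matrix_vector_mult_def)
  also have "\<dots> = (\<Sum>j\<in>UNIV. (if j = i then T $ i $ i * s $ i else 0))"
    using assms unfolding diagonal_mat_def by (intro sum.cong) auto
  finally show ?thesis by simp
qed

lemma diag_inner:
  assumes "diagonal_mat T"
  shows "w \<bullet> (T *v s) = (\<Sum>i\<in>UNIV. T $ i $ i * w $ i * s $ i)"
  unfolding inner_vec_def using diag_mv[OF assms] by (simp add: mult.commute mult.left_commute)

lemma diag_entry_psd: "diagonal_mat T \<Longrightarrow> psd_mat T \<Longrightarrow> T $ i $ i \<ge> 0"
proof -
  assume d: "diagonal_mat T" and "psd_mat T"
  then have "axis i 1 \<bullet> (T *v axis i 1) \<ge> 0" unfolding psd_mat_def by blast
  moreover have "axis i 1 \<bullet> (T *v axis i (1::real)) = T $ i $ i"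
    by (simp add: inner_axis' diag_mv[OF d])
  ultimately show ?thesis by simp
qed

lemma diag_entry_pd: "diagonal_mat T \<Longrightarrow> pd_mat T \<Longrightarrow> T $ i $ i > 0"
proof -
  assume d: "diagonal_mat T" and "pd_mat T"
  moreover have "axis i (1::real) \<noteq> 0" by (simp add: axis_eq_0_iff)
  ultimately have "axis i 1 \<bullet> (T *v axis i 1) > 0" unfolding pd_mat_def by blast
  moreover have "axis i 1 \<bullet> (T *v axis i (1::real)) = T $ i $ i"
    by (simp add: inner_axis' diag_mv[OF d])
  ultimately show ?thesis by simp
qed

lemma quad_Sigma0_diag:
  assumes "diagonal_mat T0"
  shows "stack x w \<bullet> (Sigma0 K T0 *v stack x w) = 2 * (\<Sum>i\<in>UNIV. T0 $ i $ i * w $ i * (K *v x - w) $ i)"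
proof -
  have "stack x w \<bullet> (Sigma0 K T0 *v stack x w) = (\<Sum>i\<in>UNIV. T0 $ i $ i * (K *v x) $ i * w $ i) + (\<Sum>i\<in>UNIV. T0 $ i $ i * w $ i * (K *v x) $ i) - 2 * (\<Sum>i\<in>UNIV. T0 $ i $ i * w $ i * w $ i)"
    by (simp only: quad_Sigma0 diag_inner[OF assms])
  also have "\<dots> = (\<Sum>i\<in>UNIV. T0 $ i $ i * (K *v x) $ i * w $ i + T0 $ i $ i * w $ i * (K *v x) $ i - 2 * (T0 $ i $ i * w $ i * w $ i))"
    by (simp only: sum.distrib sum_subtractf sum_distrib_left[symmetric])
  also have "\<dots> = 2 * (\<Sum>i\<in>UNIV. T0 $ i $ i * w $ i * (K *v x - w) $ i)"
    unfolding sum_distrib_left by (intro sum.cong) (auto simp: algebra_simps)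
  finally show ?thesis .
qed

lemma quad_Sigma0_nonneg:
  assumes "diagonal_mat T0" "\<forall>i. T0 $ i $ i \<ge> 0" "\<forall>i. ub $ i > 0" "\<forall>i. lb $ i > 0"
  shows "stack x (dz ub lb (K *v x)) \<bullet> (Sigma0 K T0 *v stack x (dz ub lb (K *v x)))
     \<ge> 2 * (\<Sum>i\<in>UNIV. T0 $ i $ i * min (ub $ i) (lb $ i) * \<bar>dz ub lb (K *v x) $ i\<bar>)"
proof -
  let ?u = "K *v x"
  have "T0 $ i $ i * min (ub $ i) (lb $ i) * \<bar>dz ub lb ?u $ i\<bar> \<le> T0 $ i $ i * dz ub lb ?u $ i * (?u - dz ub lb ?u) $ i" for i
  proof -
    have "min (ub $ i) (lb $ i) * \<bar>dz ub lb ?u $ i\<bar> \<le> dz ub lb ?u $ i * sat ub lb ?u $ i"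
      using dz_sat_sign assms(3,4) by blast
    then have "T0 $ i $ i * (min (ub $ i) (lb $ i) * \<bar>dz ub lb ?u $ i\<bar>) \<le> T0 $ i $ i * (dz ub lb ?u $ i * sat ub lb ?u $ i)"
      using assms(2) mult_left_mono by blast
    then show ?thesis by (simp add: sat_dz mult.assoc)
  qed
  then have "(\<Sum>i\<in>UNIV. T0 $ i $ i * min (ub $ i) (lb $ i) * \<bar>dz ub lb ?u $ i\<bar>) \<le> (\<Sum>i\<in>UNIV. T0 $ i $ i * dz ub lb ?u $ i * (?u - dz ub lb ?u) $ i)"
    by (rule sum_mono)
  then show ?thesis by (simp only: quad_Sigma0_diag[OF assms(1)])
qed

lemma Q_block: "Q = block_mat (blk11 Q) (\<chi> a b. Q $ Inl a $ Inr b) (\<chi> a b. Q $ Inr a $ Inl b) (\<chi> a b. Q $ Inr a $ Inr b)"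
  by (simp add: vec_eq_iff block_mat_def blk11_def split: sum.splits)

lemma quad_split:
  "stack x w \<bullet> (Q *v stack x w) = x \<bullet> (blk11 Q *v x) + x \<bullet> ((\<chi> a b. Q $ Inl a $ Inr b) *v w) + w \<bullet> ((\<chi> a b. Q $ Inr a $ Inl b) *v x) + w \<bullet> ((\<chi> a b. Q $ Inr a $ Inr b) *v w)"
  by (subst Q_block) (rule block_quad)

lemma quad_diff: "z \<bullet> ((A - B) *v z) = z \<bullet> (A *v z) - z \<bullet> (B *v (z::real^'a))"
  by (simp add: matrix_vector_mult_diff_rdistrib inner_diff_right)



theorem theorem1:
  fixes K :: "real^'n^'m"
    and Q :: "real^('n + 'm)^('n + 'm)"
    and ub lb :: "real^'m"
    and Y :: "real^'n \<Rightarrow> real"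
  assumes ub_pos: "\<forall>i. ub $ i > 0"
    and lb_pos: "\<forall>i. lb $ i > 0"
    and Q_sym: "symmetric_mat Q"
    and Y_def: "\<forall>x. Y x = stack x (dz ub lb (K *v x)) \<bullet> (Q *v stack x (dz ub lb (K *v x)))"
  shows
    "((\<forall>T0 R. diagonal_mat T0 \<and> psd_mat T0 \<and> symmetric_mat R \<and> psd_mat R
          \<and> psd_mat (Q - Sigma0 K T0 - SigmaR K R)
        \<longrightarrow> psd_fun Y))
   \<and> ((\<forall>T0 R. diagonal_mat T0 \<and> psd_mat T0 \<and> symmetric_mat R \<and> pd_mat R
          \<and> psd_mat (Q - Sigma0 K T0 - SigmaR K R)
        \<longrightarrow> psd_fun Y \<and> (\<forall>x. Y x \<ge> lambda_min R * (norm (sat ub lb (K *v x)))^2)))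
   \<and> ((\<forall>R. symmetric_mat R \<and> pd_mat R \<and> pd_mat (blk11 Q) \<and> psd_mat (Q - SigmaR K R)
        \<longrightarrow> pd_fun Y))
   \<and> ((\<forall>T0. diagonal_mat T0 \<and> pd_mat T0 \<and> pd_mat (blk11 Q) \<and> psd_mat (Q - Sigma0 K T0)
        \<longrightarrow> pd_fun Y \<and> radially_unbounded Y))"
proof -
  define w where "w x = dz ub lb (K *v x)" for x
  define z where "z x = stack x (w x)" for x
  have Yz: "Y x = z x \<bullet> (Q *v z x)" for x by (simp add: Y_def z_def w_def)
  have satw: "sat ub lb (K *v x) = K *v x - w x" for x unfolding w_def by (rule sat_dz)
  have Y0: "Y 0 = 0"
    using Y_def dz_zero[OF ub_pos lb_pos] by (simp add: stack_zero)
  have Yx0: "Y x = x \<bullet> (blk11 Q *v x)" if "w x = 0" for x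
    using that unfolding Yz z_def quad_split by simp
  have S0nn: "z x \<bullet> (Sigma0 K T0 *v z x) \<ge> 2 * (\<Sum>i\<in>UNIV. T0 $ i $ i * min (ub $ i) (lb $ i) * \<bar>w x $ i\<bar>)"
    if "diagonal_mat T0" "\<forall>i. T0 $ i $ i \<ge> 0" for T0 x
    using quad_Sigma0_nonneg[OF that ub_pos lb_pos] unfolding z_def w_def by blast
  have sumnn: "(\<Sum>i\<in>UNIV. T0 $ i $ i * min (ub $ i) (lb $ i) * \<bar>w x $ i\<bar>) \<ge> 0"
    if "\<forall>i. T0 $ i $ i \<ge> 0" for T0 x
    using that ub_pos lb_pos by (intro sum_nonneg) (simp add: less_imp_le)
  have lowR: "Y x \<ge> sat ub lb (K *v x) \<bullet> (R *v sat ub lb (K *v x))"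
    if "diagonal_mat T0" "psd_mat T0" "psd_mat (Q - Sigma0 K T0 - SigmaR K R)" for T0 R x
  proof -
    have Tnn: "\<forall>i. T0 $ i $ i \<ge> 0" using diag_entry_psd that(1,2) by blast
    have "Y x = z x \<bullet> ((Q - Sigma0 K T0 - SigmaR K R) *v z x) + z x \<bullet> (Sigma0 K T0 *v z x) + z x \<bullet> (SigmaR K R *v z x)"
      unfolding Yz quad_diff by simp
    moreover have "z x \<bullet> ((Q - Sigma0 K T0 - SigmaR K R) *v z x) \<ge> 0" using that(3) unfolding psd_mat_def by blast
    moreover have "z x \<bullet> (Sigma0 K T0 *v z x) \<ge> 0" using S0nn[OF that(1) Tnn, of x] sumnn[OF Tnn, of x] by linarith
    moreover have "z x \<bullet> (SigmaR K R *v z x) = sat ub lb (K *v x) \<bullet> (R *v sat ub lb (K *v x))"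
      unfolding z_def quad_SigmaR satw by simp
    ultimately show ?thesis by linarith
  qed
  have P1: "psd_fun Y" if "diagonal_mat T0" "psd_mat T0" "psd_mat R" "psd_mat (Q - Sigma0 K T0 - SigmaR K R)" for T0 R
  proof -
    have "Y x \<ge> 0" for x using lowR[OF that(1,2,4), of x] that(3) unfolding psd_mat_def by (meson order_trans)
    then show ?thesis unfolding psd_fun_def using Y0 by blast
  qed
  have pd_psd: "psd_mat R" if "pd_mat R" for R :: "real^'m^'m"
    unfolding psd_mat_def
  proof
    fix v :: "real^'m"
    show "0 \<le> v \<bullet> (R *v v)"
    proof (cases "v = 0")
      case True then show ?thesis by simp
    next
      case False then show ?thesis using that unfolding pd_mat_def by (simp add: less_imp_le)
    qed
  qed
  have P4: "pd_fun Y \<and> radially_unbounded Y" if a: "diagonal_mat T0 \<and> pd_mat T0 \<and> pd_mat (blk11 Q) \<and> psd_mat (Q - Sigma0 K T0)" for T0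
  proof -
    have Tpos: "\<forall>i. T0 $ i $ i > 0" using a diag_entry_pd by blast
    then have Tnn: "\<forall>i. T0 $ i $ i \<ge> 0" by (simp add: less_imp_le)
    define c where "c = Min (range (\<lambda>i. 2 * (T0 $ i $ i * min (ub $ i) (lb $ i))))"
    have cpos: "c > 0" unfolding c_def using Tpos ub_pos lb_pos by (subst Min_gr_iff) auto
    have lw: "Y x \<ge> c * norm (w x)" for x
    proof -
      have "Y x = z x \<bullet> ((Q - Sigma0 K T0) *v z x) + z x \<bullet> (Sigma0 K T0 *v z x)"
        unfolding Yz quad_diff by simp
      moreover have "z x \<bullet> ((Q - Sigma0 K T0) *v z x) \<ge> 0" using a unfolding psd_mat_def by blast
      moreover have "c * norm (w x) \<le> 2 * (\<Sum>i\<in>UNIV. T0 $ i $ i * min (ub $ i) (lb $ i) * \<bar>w x $ i\<bar>)"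
      proof -
        have "c * norm (w x) \<le> c * (\<Sum>i\<in>UNIV. \<bar>w x $ i\<bar>)"
          using cpos norm_le_l1_cart by (simp add: mult_left_mono)
        also have "\<dots> = (\<Sum>i\<in>UNIV. c * \<bar>w x $ i\<bar>)" by (simp add: sum_distrib_left)
        also have "\<dots> \<le> (\<Sum>i\<in>UNIV. 2 * (T0 $ i $ i * min (ub $ i) (lb $ i)) * \<bar>w x $ i\<bar>)"
        proof (rule sum_mono)
          fix i
          have "c \<le> 2 * (T0 $ i $ i * min (ub $ i) (lb $ i))" unfolding c_def by (rule Min_le) auto
          then show "c * \<bar>w x $ i\<bar> \<le> 2 * (T0 $ i $ i * min (ub $ i) (lb $ i)) * \<bar>w x $ i\<bar>"
            by (simp add: mult_right_mono)
        qed
        also have "\<dots> = 2 * (\<Sum>i\<in>UNIV. T0 $ i $ i * min (ub $ i) (lb $ i) * \<bar>w x $ i\<bar>)"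
          by (simp add: sum_distrib_left mult.assoc)
        finally show ?thesis .
      qed
      moreover note S0nn[OF conjunct1[OF a] Tnn, of x]
      ultimately show ?thesis by linarith
    qed
    have pdY: "Y x > 0" if "x \<noteq> 0" for x
    proof (cases "w x = 0")
      case True
      then show ?thesis using Yx0 a that unfolding pd_mat_def by simp
    next
      case False
      then have "c * norm (w x) > 0" using cpos by simp
      then show ?thesis using lw[of x] by linarith
    qed
    show "pd_fun Y \<and> radially_unbounded Y"
    proof
      show "pd_fun Y" unfolding pd_fun_def using Y0 pdY by blast
    next
      obtain \<alpha> where al: "\<alpha> > 0" "\<forall>x. x \<bullet> (blk11 Q *v x) \<ge> \<alpha> * norm x ^ 2"
        using pd_lower a by blast
      define B where "B = (\<chi> a b. Q $ Inl a $ Inr b)"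
      define Cm where "Cm = (\<chi> a b. Q $ Inr a $ Inl b)"
      define D where "D = (\<chi> a b. Q $ Inr a $ Inr b)"
      obtain CB where CB: "CB > 0" "\<forall>v. norm (B *v v) \<le> CB * norm v" using mv_bound by blast
      obtain CC where CC: "CC > 0" "\<forall>v. norm (Cm *v v) \<le> CC * norm v" using mv_bound by blast
      obtain CD where CD: "CD > 0" "\<forall>v. norm (D *v v) \<le> CD * norm v" using mv_bound by blast
      define C where "C = CB + CC + CD"
      have Cpos: "C > 0" unfolding C_def using CB CC CD by simp
      have lq: "Y x \<ge> \<alpha> * norm x ^ 2 - 2 * C * (norm x * norm (w x)) - C * (norm (w x) * norm (w x))" for x
      proof -
        let ?nx = "norm x" and ?nw = "norm (w x)"
        have eq: "Y x = x \<bullet> (blk11 Q *v x) + x \<bullet> (B *v w x) + w x \<bullet> (Cm *v x) + w x \<bullet> (D *v w x)"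
          unfolding Yz z_def quad_split B_def Cm_def D_def by simp
        have b1: "\<bar>x \<bullet> (B *v w x)\<bar> \<le> C * (?nx * ?nw)"
        proof -
          have "\<bar>x \<bullet> (B *v w x)\<bar> \<le> ?nx * norm (B *v w x)" by (rule Cauchy_Schwarz_ineq2)
          also have "\<dots> \<le> ?nx * (CB * ?nw)" using CB by (simp add: mult_left_mono)
          also have "\<dots> \<le> ?nx * (C * ?nw)" unfolding C_def using CC CD
            by (intro mult_left_mono) (auto intro!: mult_right_mono)
          finally show ?thesis by (simp add: algebra_simps)
        qed
        have b2: "\<bar>w x \<bullet> (Cm *v x)\<bar> \<le> C * (?nx * ?nw)"
        proof -
          have "\<bar>w x \<bullet> (Cm *v x)\<bar> \<le> ?nw * norm (Cm *v x)" by (rule Cauchy_Schwarz_ineq2)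
          also have "\<dots> \<le> ?nw * (CC * ?nx)" using CC by (simp add: mult_left_mono)
          also have "\<dots> \<le> ?nw * (C * ?nx)" unfolding C_def using CB CD
            by (intro mult_left_mono) (auto intro!: mult_right_mono)
          finally show ?thesis by (simp add: algebra_simps)
        qed
        have b3: "\<bar>w x \<bullet> (D *v w x)\<bar> \<le> C * (?nw * ?nw)"
        proof -
          have "\<bar>w x \<bullet> (D *v w x)\<bar> \<le> ?nw * norm (D *v w x)" by (rule Cauchy_Schwarz_ineq2)
          also have "\<dots> \<le> ?nw * (CD * ?nw)" using CD by (simp add: mult_left_mono)
          also have "\<dots> \<le> ?nw * (C * ?nw)" unfolding C_def using CB CC
            by (intro mult_left_mono) (auto intro!: mult_right_mono)
          finally show ?thesis by (simp add: algebra_simps)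
        qed
        show ?thesis using eq b1 b2 b3 al(2)[rule_format, of x] by linarith
      qed
      define \<delta> where "\<delta> = min 1 (\<alpha> / (6 * C))"
      have dpos: "\<delta> > 0" unfolding \<delta>_def using al Cpos by simp
      have d1: "\<delta> \<le> 1" unfolding \<delta>_def by simp
      have d2: "6 * C * \<delta> \<le> \<alpha>"
      proof -
        have "\<delta> \<le> \<alpha> / (6 * C)" unfolding \<delta>_def by simp
        then have "6 * C * \<delta> \<le> 6 * C * (\<alpha> / (6 * C))" using Cpos by (intro mult_left_mono) auto
        also have "\<dots> = \<alpha>" using Cpos by simp
        finally show ?thesis .
      qed
      define e where "e = min (\<alpha> / 2) (c * \<delta>)"
      have epos: "e > 0" unfolding e_def using al cpos dpos by simp
      have lin: "Y x \<ge> e * norm x" if "norm x \<ge> 1" for x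
      proof (cases "norm (w x) \<le> \<delta> * norm x")
        case True
        let ?nx = "norm x" and ?nw = "norm (w x)"
        have nx: "?nx \<ge> 0" by simp
        have "2 * C * (?nx * ?nw) \<le> 2 * C * (?nx * (\<delta> * ?nx))"
          using True Cpos nx by (intro mult_left_mono) auto
        moreover have "C * (?nw * ?nw) \<le> C * ((\<delta> * ?nx) * (\<delta> * ?nx))"
          using True Cpos nx dpos by (intro mult_left_mono mult_mono) auto
        moreover have "C * ((\<delta> * ?nx) * (\<delta> * ?nx)) \<le> C * (\<delta> * ?nx * ?nx)"
        proof -
          have "\<delta> * \<delta> \<le> \<delta> * 1" using d1 dpos by (intro mult_left_mono) auto
          then have "(\<delta> * \<delta>) * (C * (?nx * ?nx)) \<le> \<delta> * (C * (?nx * ?nx))"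
            using Cpos nx by (intro mult_right_mono) auto
          then show ?thesis by (simp add: algebra_simps)
        qed
        moreover have "3 * C * \<delta> * (?nx * ?nx) \<le> (\<alpha> / 2) * (?nx * ?nx)"
          using d2 nx by (intro mult_right_mono) auto
        moreover have "?nx ^ 2 = ?nx * ?nx" by (simp add: power2_eq_square)
        ultimately have "Y x \<ge> (\<alpha> / 2) * (?nx * ?nx)" using lq[of x] by (simp add: algebra_simps)
        moreover have "(\<alpha> / 2) * (?nx * ?nx) \<ge> (\<alpha> / 2) * ?nx"
          using that al by (intro mult_left_mono) (auto simp: mult_le_cancel_left1)
        moreover have "(\<alpha> / 2) * ?nx \<ge> e * ?nx" unfolding e_def using nx by (intro mult_right_mono) auto
        ultimately show ?thesis by linarith
      next
        case False
        then have "c * norm (w x) \<ge> c * (\<delta> * norm x)" using cpos by (intro mult_left_mono) auto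
        moreover have "c * (\<delta> * norm x) \<ge> e * norm x" unfolding e_def
          by (simp add: mult.assoc[symmetric] mult_right_mono)
        ultimately show ?thesis using lw[of x] by linarith
      qed
      show "radially_unbounded Y"
        unfolding radially_unbounded_def filterlim_at_top eventually_at_infinity
      proof
        fix Zb :: real
        show "\<exists>b. \<forall>x. b \<le> norm x \<longrightarrow> Zb \<le> Y x"
        proof (intro exI allI impI)
          fix x :: "real^'n" assume "max 1 (Zb / e) \<le> norm x"
          then have "norm x \<ge> 1" "Zb / e \<le> norm x" by auto
          then have "Zb \<le> e * norm x" using epos by (simp add: divide_le_eq mult.commute)
          then show "Zb \<le> Y x" using lin[OF \<open>norm x \<ge> 1\<close>] by linarith
        qed
      qed
    qed
  qed
  show ?thesis
  proof (intro conjI allI impI)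
    fix T0 R assume a: "diagonal_mat T0 \<and> psd_mat T0 \<and> symmetric_mat R \<and> psd_mat R \<and> psd_mat (Q - Sigma0 K T0 - SigmaR K R)"
    then show "psd_fun Y" using P1 by blast
  next
    fix T0 R assume a: "diagonal_mat T0 \<and> psd_mat T0 \<and> symmetric_mat R \<and> pd_mat R \<and> psd_mat (Q - Sigma0 K T0 - SigmaR K R)"
    then show "psd_fun Y" using P1 pd_psd by blast
  next
    fix T0 R x assume a: "diagonal_mat T0 \<and> psd_mat T0 \<and> symmetric_mat R \<and> pd_mat R \<and> psd_mat (Q - Sigma0 K T0 - SigmaR K R)"
    have "lambda_min R * (norm (sat ub lb (K *v x)))^2 \<le> sat ub lb (K *v x) \<bullet> (R *v sat ub lb (K *v x))"
      using a lambda_min_le unfolding symmetric_mat_def by blast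
    then show "lambda_min R * (norm (sat ub lb (K *v x)))^2 \<le> Y x" using lowR a by (meson order_trans)
  next
    fix R assume a: "symmetric_mat R \<and> pd_mat R \<and> pd_mat (blk11 Q) \<and> psd_mat (Q - SigmaR K R)"
    have "Y x > 0" if "x \<noteq> 0" for x
    proof -
      have eq: "Y x = z x \<bullet> ((Q - SigmaR K R) *v z x) + sat ub lb (K *v x) \<bullet> (R *v sat ub lb (K *v x))"
        unfolding Yz quad_diff unfolding z_def quad_SigmaR satw by simp
      have nn: "z x \<bullet> ((Q - SigmaR K R) *v z x) \<ge> 0" using a unfolding psd_mat_def by blast
      show ?thesis
      proof (cases "sat ub lb (K *v x) = 0")
        case True
        then have "K *v x = 0" using sat_zero ub_pos lb_pos by blast
        then have "w x = 0" unfolding w_def using dz_zero[OF ub_pos lb_pos] by simp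
        then show ?thesis using Yx0 a that unfolding pd_mat_def by simp
      next
        case False
        then have "sat ub lb (K *v x) \<bullet> (R *v sat ub lb (K *v x)) > 0" using a unfolding pd_mat_def by blast
        then show ?thesis using eq nn by linarith
      qed
    qed
    then show "pd_fun Y" unfolding pd_fun_def using Y0 by blast
  next
    fix T0 assume "diagonal_mat T0 \<and> pd_mat T0 \<and> pd_mat (blk11 Q) \<and> psd_mat (Q - Sigma0 K T0)"
    then show "pd_fun Y" using P4 by blast
  next
    fix T0 assume "diagonal_mat T0 \<and> pd_mat T0 \<and> pd_mat (blk11 Q) \<and> psd_mat (Q - Sigma0 K T0)"
    then show "radially_unbounded Y" using P4 by blast
  qed
qed



end
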